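(* Let $\mathcal{C}$ and $\mathcal{D}$ be cartesian left-additive categories and $F:\mathcal{C}\to\mathcal{D}$ a cartesian left-additive functor. Then there is a cartesian left-additive functor $\mathbf{Lens}_A(F):\mathbf{Lens}_A(\mathcal{C})\to\mathbf{Lens}_A(\mathcal{D})$ which sends an object $(A,A')$ to $(F(A),F(A'))$ and a morphism $(f,f^* ):(A,A')\to(B,B')$ to $(F(f),\overline{f^*})$, where $\overline{f^*}$ is the composite $F(A)\times F(B')\cong F(A\times B')\xrightarrow{F(f^* )}F(A')$.
   Context: Composition is written diagrammatically. A cartesian left-additive category is a category with chosen finite products in which each hom-set is a commutative monoid (addition $+$, zero $0$) with $f;(g+h)=f;g+f;h$, $f;0=0$, and all projections are additive (a map $h$ is additive if $(x+y);h=x;h+y;h$ and $0;h=0$). A cartesian left-additive functor is a functor preserving finite products and the commutative monoid structure ($F(f+g)=F(f)+F(g)$, $F(0)=0$). A morphism $f:X\times A\to B$ is additive in the second variable if $\langle x,a_1+a_2\rangle;f=\langle x,a_1\rangle;f+\langle x,a_2\rangle;f$ and $\langle x,0\rangle;f=0$ for all $x:Z\to X$, $a_1,a_2:Z\to A$. $\mathbf{Lens}(\mathcal{C})$ has objects pairs $(A,A')$; morphisms $(A,A')\to(B,B')$ are pairs $(f,f^* )$ with $f:A\to B$, $f^*:A\times B'\to A'$; identity $(1_A,\pi_1)$; composite of $(f,f^* )$ and $(g,g^* )$ is $(f;g,\langle\pi_0,\langle\pi_0;f,\pi_1\rangle;g^*\rangle;f^* )$. $\mathbf{Lens}_A(\mathcal{C})$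 is the wide subcategory of lenses $(f,f^* )$ with $f^*$ additive in the second variable; it is cartesian left-additive, with the monoid on $(A,A')$ given by unit $(0_A,!):(1,1)\to(A,A')$ and multiplication $(+_A,\pi_2;\Delta_{A'}):(A\times A,A'\times A')\to(A,A')$. *)

theory Defs
  imports Main
begin

text \<open>Composition is diagrammatic: c_comp C f g is f;g (first f, then g).\<close>

record ('o, 'a) clac =
  c_obj  :: "'o set"
  c_arr  :: "'a set"
  c_dom  :: "'a \<Rightarrow> 'o"
  c_cod  :: "'a \<Rightarrow> 'o"
  c_id   :: "'o \<Rightarrow> 'a"
  c_comp :: "'a \<Rightarrow> 'a \<Rightarrow> 'a"
  c_term :: "'o"
  c_bang :: "'o \<Rightarrow> 'a"
  c_prod :: "'o \<Rightarrow> 'o \<Rightarrow> 'o"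
  c_pi0  :: "'o \<Rightarrow> 'o \<Rightarrow> 'a"
  c_pi1  :: "'o \<Rightarrow> 'o \<Rightarrow> 'a"
  c_pair :: "'a \<Rightarrow> 'a \<Rightarrow> 'a"
  c_add  :: "'a \<Rightarrow> 'a \<Rightarrow> 'a"
  c_zero :: "'o \<Rightarrow> 'o \<Rightarrow> 'a"

definition hom :: "('o, 'a) clac \<Rightarrow> 'o \<Rightarrow> 'o \<Rightarrow> 'a set" where
  "hom C A B = {f \<in> c_arr C. c_dom C f = A \<and> c_cod C f = B}"

definition is_category :: "('o, 'a) clac \<Rightarrow> bool" where
  "is_category C \<longleftrightarrow>
     (\<forall>f \<in> c_arr C. c_dom C f \<in> c_obj C \<and> c_cod C f \<in> c_obj C) \<and>
     (\<forall>A \<in> c_obj C. c_id C A \<in> hom C A A) \<and>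
     (\<forall>A B D f g. f \<in> hom C A B \<longrightarrow> g \<in> hom C B D \<longrightarrow> c_comp C f g \<in> hom C A D) \<and>
     (\<forall>A B f. f \<in> hom C A B \<longrightarrow> c_comp C (c_id C A) f = f \<and> c_comp C f (c_id C B) = f) \<and>
     (\<forall>A B D E f g h. f \<in> hom C A B \<longrightarrow> g \<in> hom C B D \<longrightarrow> h \<in> hom C D E \<longrightarrow>
        c_comp C (c_comp C f g) h = c_comp C f (c_comp C g h))"

definition is_cartesian :: "('o, 'a) clac \<Rightarrow> bool" where
  "is_cartesian C \<longleftrightarrow>
     c_term C \<in> c_obj C \<and>
     (\<forall>A \<in> c_obj C. c_bang C A \<in> hom C A (c_term C)) \<and>
     (\<forall>A f. f \<in> hom C A (c_term C) \<longrightarrow> f = c_bang C A) \<and>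
     (\<forall>A \<in> c_obj C. \<forall>B \<in> c_obj C.
        c_prod C A B \<in> c_obj C \<and>
        c_pi0 C A B \<in> hom C (c_prod C A B) A \<and>
        c_pi1 C A B \<in> hom C (c_prod C A B) B) \<and>
     (\<forall>Z A B f g. A \<in> c_obj C \<longrightarrow> B \<in> c_obj C \<longrightarrow> f \<in> hom C Z A \<longrightarrow> g \<in> hom C Z B \<longrightarrow>
        c_pair C f g \<in> hom C Z (c_prod C A B) \<and>
        c_comp C (c_pair C f g) (c_pi0 C A B) = f \<and>
        c_comp C (c_pair C f g) (c_pi1 C A B) = g) \<and>
     (\<forall>Z A B h. A \<in> c_obj C \<longrightarrow> B \<in> c_obj C \<longrightarrow> h \<in> hom C Z (c_prod C A B) \<longrightarrow>
        c_pair C (c_comp C h (c_pi0 C A B)) (c_comp C h (c_pi1 C A B)) = h)"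

definition is_additive :: "('o, 'a) clac \<Rightarrow> 'o \<Rightarrow> 'o \<Rightarrow> 'a \<Rightarrow> bool" where
  "is_additive C X Y h \<longleftrightarrow>
     (\<forall>Z x y. x \<in> hom C Z X \<longrightarrow> y \<in> hom C Z X \<longrightarrow>
        c_comp C (c_add C x y) h = c_add C (c_comp C x h) (c_comp C y h)) \<and>
     (\<forall>Z \<in> c_obj C. c_comp C (c_zero C Z X) h = c_zero C Z Y)"

definition is_left_additive :: "('o, 'a) clac \<Rightarrow> bool" where
  "is_left_additive C \<longleftrightarrow>
     (\<forall>A B f g. f \<in> hom C A B \<longrightarrow> g \<in> hom C A B \<longrightarrow> c_add C f g \<in> hom C A B) \<and>
     (\<forall>A \<in> c_obj C. \<forall>B \<in> c_obj C. c_zero C A B \<in> hom C A B) \<and>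
     (\<forall>A B f g h. f \<in> hom C A B \<longrightarrow> g \<in> hom C A B \<longrightarrow> h \<in> hom C A B \<longrightarrow>
        c_add C (c_add C f g) h = c_add C f (c_add C g h)) \<and>
     (\<forall>A B f g. f \<in> hom C A B \<longrightarrow> g \<in> hom C A B \<longrightarrow> c_add C f g = c_add C g f) \<and>
     (\<forall>A B f. f \<in> hom C A B \<longrightarrow> c_add C f (c_zero C A B) = f) \<and>
     (\<forall>A B D f g h. f \<in> hom C A B \<longrightarrow> g \<in> hom C B D \<longrightarrow> h \<in> hom C B D \<longrightarrow>
        c_comp C f (c_add C g h) = c_add C (c_comp C f g) (c_comp C f h)) \<and>
     (\<forall>A B D f. f \<in> hom C A B \<longrightarrow> D \<in> c_obj C \<longrightarrow>
        c_comp C f (c_zero C B D) = c_zero C A D) \<and>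
     (\<forall>A \<in> c_obj C. \<forall>B \<in> c_obj C.
        is_additive C (c_prod C A B) A (c_pi0 C A B) \<and>
        is_additive C (c_prod C A B) B (c_pi1 C A B))"

definition clac :: "('o, 'a) clac \<Rightarrow> bool" where
  "clac C \<longleftrightarrow> is_category C \<and> is_cartesian C \<and> is_left_additive C"

definition is_iso :: "('o, 'a) clac \<Rightarrow> 'a \<Rightarrow> bool" where
  "is_iso C f \<longleftrightarrow> f \<in> c_arr C \<and>
     (\<exists>g \<in> hom C (c_cod C f) (c_dom C f).
        c_comp C f g = c_id C (c_dom C f) \<and> c_comp C g f = c_id C (c_cod C f))"

definition iso_inv :: "('o, 'a) clac \<Rightarrow> 'a \<Rightarrow> 'a" where
  "iso_inv C f = (SOME g. g \<in> hom C (c_cod C f) (c_dom C f) \<and>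
        c_comp C f g = c_id C (c_dom C f) \<and> c_comp C g f = c_id C (c_cod C f))"

definition is_functor ::
  "('o, 'a) clac \<Rightarrow> ('p, 'b) clac \<Rightarrow> ('o \<Rightarrow> 'p) \<Rightarrow> ('a \<Rightarrow> 'b) \<Rightarrow> bool" where
  "is_functor C D Fo Fa \<longleftrightarrow>
     (\<forall>A \<in> c_obj C. Fo A \<in> c_obj D) \<and>
     (\<forall>A B f. f \<in> hom C A B \<longrightarrow> Fa f \<in> hom D (Fo A) (Fo B)) \<and>
     (\<forall>A \<in> c_obj C. Fa (c_id C A) = c_id D (Fo A)) \<and>
     (\<forall>A B E f g. f \<in> hom C A B \<longrightarrow> g \<in> hom C B E \<longrightarrow>
        Fa (c_comp C f g) = c_comp D (Fa f) (Fa g))"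

definition preserves_products ::
  "('o, 'a) clac \<Rightarrow> ('p, 'b) clac \<Rightarrow> ('o \<Rightarrow> 'p) \<Rightarrow> ('a \<Rightarrow> 'b) \<Rightarrow> bool" where
  "preserves_products C D Fo Fa \<longleftrightarrow>
     is_iso D (c_bang D (Fo (c_term C))) \<and>
     (\<forall>A \<in> c_obj C. \<forall>B \<in> c_obj C.
        is_iso D (c_pair D (Fa (c_pi0 C A B)) (Fa (c_pi1 C A B))))"

definition preserves_additive ::
  "('o, 'a) clac \<Rightarrow> ('p, 'b) clac \<Rightarrow> ('o \<Rightarrow> 'p) \<Rightarrow> ('a \<Rightarrow> 'b) \<Rightarrow> bool" where
  "preserves_additive C D Fo Fa \<longleftrightarrow>
     (\<forall>A B f g. f \<in> hom C A B \<longrightarrow> g \<in> hom C A B \<longrightarrow>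
        Fa (c_add C f g) = c_add D (Fa f) (Fa g)) \<and>
     (\<forall>A \<in> c_obj C. \<forall>B \<in> c_obj C. Fa (c_zero C A B) = c_zero D (Fo A) (Fo B))"

definition clac_functor ::
  "('o, 'a) clac \<Rightarrow> ('p, 'b) clac \<Rightarrow> ('o \<Rightarrow> 'p) \<Rightarrow> ('a \<Rightarrow> 'b) \<Rightarrow> bool" where
  "clac_functor C D Fo Fa \<longleftrightarrow>
     is_functor C D Fo Fa \<and> preserves_products C D Fo Fa \<and> preserves_additive C D Fo Fa"

definition additive_2nd :: "('o, 'a) clac \<Rightarrow> 'o \<Rightarrow> 'o \<Rightarrow> 'o \<Rightarrow> 'a \<Rightarrow> bool" where
  "additive_2nd C X A B f \<longleftrightarrow>
     (\<forall>Z x a1 a2. x \<in> hom C Z X \<longrightarrow> a1 \<in> hom C Z A \<longrightarrow> a2 \<in> hom C Z A \<longrightarrow>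
        c_comp C (c_pair C x (c_add C a1 a2)) f =
        c_add C (c_comp C (c_pair C x a1) f) (c_comp C (c_pair C x a2) f)) \<and>
     (\<forall>Z x. x \<in> hom C Z X \<longrightarrow>
        c_comp C (c_pair C x (c_zero C Z A)) f = c_zero C Z B)"

text \<open>A lens (f, f*) : (A,A') \<rightarrow> (B,B') is represented as the tuple
  ((A,A'), (B,B'), f, f*), carrying its domain and codomain.\<close>

type_synonym ('o, 'a) lens = "('o \<times> 'o) \<times> ('o \<times> 'o) \<times> 'a \<times> 'a"

definition lens_arr :: "('o, 'a) clac \<Rightarrow> ('o, 'a) lens set" where
  "lens_arr C = {((A, A'), (B, B'), f, fs).
      A \<in> c_obj C \<and> A' \<in> c_obj C \<and> B \<in> c_obj C \<and> B' \<in> c_obj C \<and>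
      f \<in> hom C A B \<and> fs \<in> hom C (c_prod C A B') A' \<and>
      additive_2nd C A B' A' fs}"

fun lens_comp :: "('o, 'a) clac \<Rightarrow> ('o, 'a) lens \<Rightarrow> ('o, 'a) lens \<Rightarrow> ('o, 'a) lens" where
  "lens_comp C ((A, A'), (B, B'), f, fs) (_, (E, E'), g, gs) =
     ((A, A'), (E, E'), c_comp C f g,
      c_comp C
        (c_pair C (c_pi0 C A E')
           (c_comp C (c_pair C (c_comp C (c_pi0 C A E') f) (c_pi1 C A E')) gs))
        fs)"

fun lens_id :: "('o, 'a) clac \<Rightarrow> 'o \<times> 'o \<Rightarrow> ('o, 'a) lens" where
  "lens_id C (A, A') = ((A, A'), (A, A'), c_id C A, c_pi1 C A A')"

fun lens_bang :: "('o, 'a) clac \<Rightarrow> 'o \<times> 'o \<Rightarrow> ('o, 'a) lens" where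
  "lens_bang C (A, A') = ((A, A'), (c_term C, c_term C), c_bang C A,
       c_zero C (c_prod C A (c_term C)) A')"

fun lens_prod :: "('o, 'a) clac \<Rightarrow> 'o \<times> 'o \<Rightarrow> 'o \<times> 'o \<Rightarrow> 'o \<times> 'o" where
  "lens_prod C (A, A') (B, B') = (c_prod C A B, c_prod C A' B')"

fun lens_pi0 :: "('o, 'a) clac \<Rightarrow> 'o \<times> 'o \<Rightarrow> 'o \<times> 'o \<Rightarrow> ('o, 'a) lens" where
  "lens_pi0 C (A, A') (B, B') =
     ((c_prod C A B, c_prod C A' B'), (A, A'), c_pi0 C A B,
      c_pair C (c_pi1 C (c_prod C A B) A') (c_zero C (c_prod C (c_prod C A B) A') B'))"

fun lens_pi1 :: "('o, 'a) clac \<Rightarrow> 'o \<times> 'o \<Rightarrow> 'o \<times> 'o \<Rightarrow> ('o, 'a) lens" where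
  "lens_pi1 C (A, A') (B, B') =
     ((c_prod C A B, c_prod C A' B'), (B, B'), c_pi1 C A B,
      c_pair C (c_zero C (c_prod C (c_prod C A B) B') A') (c_pi1 C (c_prod C A B) B'))"

fun lens_pair :: "('o, 'a) clac \<Rightarrow> ('o, 'a) lens \<Rightarrow> ('o, 'a) lens \<Rightarrow> ('o, 'a) lens" where
  "lens_pair C ((Z, Z'), (A, A'), f, fs) (_, (B, B'), g, gs) =
     ((Z, Z'), (c_prod C A B, c_prod C A' B'), c_pair C f g,
      c_add C
        (c_comp C (c_pair C (c_pi0 C Z (c_prod C A' B'))
                     (c_comp C (c_pi1 C Z (c_prod C A' B')) (c_pi0 C A' B'))) fs)
        (c_comp C (c_pair C (c_pi0 C Z (c_prod C A' B'))
                     (c_comp C (c_pi1 C Z (c_prod C A' B')) (c_pi1 C A' B'))) gs))"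

text \<open>Hom-set monoid: pointwise (f,f*) + (g,g*) = (f+g, f*+g*), zero (0,0).
  This induces exactly the object monoids (0_A,!) and (+_A, \<pi>2;\<Delta>).\<close>

fun lens_add :: "('o, 'a) clac \<Rightarrow> ('o, 'a) lens \<Rightarrow> ('o, 'a) lens \<Rightarrow> ('o, 'a) lens" where
  "lens_add C (a, b, f, fs) (_, _, g, gs) = (a, b, c_add C f g, c_add C fs gs)"

fun lens_zero :: "('o, 'a) clac \<Rightarrow> 'o \<times> 'o \<Rightarrow> 'o \<times> 'o \<Rightarrow> ('o, 'a) lens" where
  "lens_zero C (A, A') (B, B') =
     ((A, A'), (B, B'), c_zero C A B, c_zero C (c_prod C A B') A')"

definition LensA :: "('o, 'a) clac \<Rightarrow> ('o \<times> 'o, ('o, 'a) lens) clac" where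
  "LensA C = \<lparr>
     c_obj = c_obj C \<times> c_obj C,
     c_arr = lens_arr C,
     c_dom = (\<lambda>(a, b, f, fs). a),
     c_cod = (\<lambda>(a, b, f, fs). b),
     c_id = lens_id C,
     c_comp = lens_comp C,
     c_term = (c_term C, c_term C),
     c_bang = lens_bang C,
     c_prod = lens_prod C,
     c_pi0 = lens_pi0 C,
     c_pi1 = lens_pi1 C,
     c_pair = lens_pair C,
     c_add = lens_add C,
     c_zero = lens_zero C \<rparr>"

fun LensA_obj :: "('o \<Rightarrow> 'p) \<Rightarrow> 'o \<times> 'o \<Rightarrow> 'p \<times> 'p" where
  "LensA_obj Fo (A, A') = (Fo A, Fo A')"

fun LensA_arr :: "('o, 'a) clac \<Rightarrow> ('p, 'b) clac \<Rightarrow> ('o \<Rightarrow> 'p) \<Rightarrow> ('a \<Rightarrow> 'b)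
    \<Rightarrow> ('o, 'a) lens \<Rightarrow> ('p, 'b) lens" where
  "LensA_arr C D Fo Fa ((A, A'), (B, B'), f, fs) =
     ((Fo A, Fo A'), (Fo B, Fo B'), Fa f,
      c_comp D (iso_inv D (c_pair D (Fa (c_pi0 C A B')) (Fa (c_pi1 C A B')))) (Fa fs))"

end

theory Submission
  imports Defs
begin

locale cl =
  fixes C :: "('o, 'a) clac"
  assumes clac: "clac C"
begin

lemma cat: "is_category C" and cart: "is_cartesian C" and ladd: "is_left_additive C"
  using clac unfolding clac_def by auto

lemma hom_iff: "f \<in> hom C A B \<longleftrightarrow> f \<in> c_arr C \<and> c_dom C f = A \<and> c_cod C f = B"
  by (simp add: hom_def)

lemma dom_obj[simp]: "f \<in> c_arr C \<Longrightarrow> c_dom C f \<in> c_obj C"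
  using cat unfolding is_category_def by auto
lemma cod_obj[simp]: "f \<in> c_arr C \<Longrightarrow> c_cod C f \<in> c_obj C"
  using cat unfolding is_category_def by auto

lemma id_arr[simp]: "A \<in> c_obj C \<Longrightarrow> c_id C A \<in> c_arr C"
  and id_dom[simp]: "A \<in> c_obj C \<Longrightarrow> c_dom C (c_id C A) = A"
  and id_cod[simp]: "A \<in> c_obj C \<Longrightarrow> c_cod C (c_id C A) = A"
  using cat unfolding is_category_def hom_def by auto

lemma comp_hom: "f \<in> hom C A B \<Longrightarrow> g \<in> hom C B E \<Longrightarrow> c_comp C f g \<in> hom C A E"
  using cat unfolding is_category_def by blast

lemma comp_arr[simp]: "f \<in> c_arr C \<Longrightarrow> g \<in> c_arr C \<Longrightarrow> c_cod C f = c_dom C g \<Longrightarrow> c_comp C f g \<in> c_arr C"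
  and comp_dom[simp]: "f \<in> c_arr C \<Longrightarrow> g \<in> c_arr C \<Longrightarrow> c_cod C f = c_dom C g \<Longrightarrow> c_dom C (c_comp C f g) = c_dom C f"
  and comp_cod[simp]: "f \<in> c_arr C \<Longrightarrow> g \<in> c_arr C \<Longrightarrow> c_cod C f = c_dom C g \<Longrightarrow> c_cod C (c_comp C f g) = c_cod C g"
  using comp_hom[of f "c_dom C f" "c_cod C f" g "c_cod C g"] by (auto simp: hom_def)

lemma id_left[simp]: "f \<in> c_arr C \<Longrightarrow> c_dom C f = A \<Longrightarrow> c_comp C (c_id C A) f = f"
  and id_right[simp]: "f \<in> c_arr C \<Longrightarrow> c_cod C f = A \<Longrightarrow> c_comp C f (c_id C A) = f"
  using cat unfolding is_category_def hom_def by auto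

lemma assoc[simp]: "f \<in> c_arr C \<Longrightarrow> g \<in> c_arr C \<Longrightarrow> h \<in> c_arr C \<Longrightarrow> c_cod C f = c_dom C g \<Longrightarrow>
   c_cod C g = c_dom C h \<Longrightarrow> c_comp C (c_comp C f g) h = c_comp C f (c_comp C g h)"
proof -
  assume a: "f \<in> c_arr C" "g \<in> c_arr C" "h \<in> c_arr C" "c_cod C f = c_dom C g" "c_cod C g = c_dom C h"
  have "\<forall>A B D E f g h. f \<in> hom C A B \<longrightarrow> g \<in> hom C B D \<longrightarrow> h \<in> hom C D E \<longrightarrow>
        c_comp C (c_comp C f g) h = c_comp C f (c_comp C g h)" using cat unfolding is_category_def by blast
  then show ?thesis using a by (auto simp: hom_def)
qed

lemma term_obj[simp]: "c_term C \<in> c_obj C"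
  using cart unfolding is_cartesian_def by auto
lemma bang_arr[simp]: "A \<in> c_obj C \<Longrightarrow> c_bang C A \<in> c_arr C"
  and bang_dom[simp]: "A \<in> c_obj C \<Longrightarrow> c_dom C (c_bang C A) = A"
  and bang_cod[simp]: "A \<in> c_obj C \<Longrightarrow> c_cod C (c_bang C A) = c_term C"
  using cart unfolding is_cartesian_def hom_def by auto
lemma bang_uniq: "f \<in> c_arr C \<Longrightarrow> c_cod C f = c_term C \<Longrightarrow> f = c_bang C (c_dom C f)"
  using cart unfolding is_cartesian_def hom_def by auto
lemma term_eq: "f \<in> c_arr C \<Longrightarrow> g \<in> c_arr C \<Longrightarrow> c_cod C f = c_term C \<Longrightarrow> c_cod C g = c_term C
   \<Longrightarrow> c_dom C f = c_dom C g \<Longrightarrow> f = g"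
  using bang_uniq by metis

lemma prod_obj[simp]: "A \<in> c_obj C \<Longrightarrow> B \<in> c_obj C \<Longrightarrow> c_prod C A B \<in> c_obj C"
  and pi0_arr[simp]: "A \<in> c_obj C \<Longrightarrow> B \<in> c_obj C \<Longrightarrow> c_pi0 C A B \<in> c_arr C"
  and pi0_dom[simp]: "A \<in> c_obj C \<Longrightarrow> B \<in> c_obj C \<Longrightarrow> c_dom C (c_pi0 C A B) = c_prod C A B"
  and pi0_cod[simp]: "A \<in> c_obj C \<Longrightarrow> B \<in> c_obj C \<Longrightarrow> c_cod C (c_pi0 C A B) = A"
  and pi1_arr[simp]: "A \<in> c_obj C \<Longrightarrow> B \<in> c_obj C \<Longrightarrow> c_pi1 C A B \<in> c_arr C"
  and pi1_dom[simp]: "A \<in> c_obj C \<Longrightarrow> B \<in> c_obj C \<Longrightarrow> c_dom C (c_pi1 C A B) = c_prod C A B"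
  and pi1_cod[simp]: "A \<in> c_obj C \<Longrightarrow> B \<in> c_obj C \<Longrightarrow> c_cod C (c_pi1 C A B) = B"
  using cart unfolding is_cartesian_def hom_def by auto

lemma pair_raw: "A \<in> c_obj C \<Longrightarrow> B \<in> c_obj C \<Longrightarrow> f \<in> hom C Z A \<Longrightarrow> g \<in> hom C Z B \<Longrightarrow>
        c_pair C f g \<in> hom C Z (c_prod C A B) \<and>
        c_comp C (c_pair C f g) (c_pi0 C A B) = f \<and>
        c_comp C (c_pair C f g) (c_pi1 C A B) = g"
  using cart unfolding is_cartesian_def by blast

lemma pair_facts: "f \<in> c_arr C \<Longrightarrow> g \<in> c_arr C \<Longrightarrow> c_dom C f = c_dom C g \<Longrightarrow>
   c_pair C f g \<in> hom C (c_dom C f) (c_prod C (c_cod C f) (c_cod C g)) \<and>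
   c_comp C (c_pair C f g) (c_pi0 C (c_cod C f) (c_cod C g)) = f \<and>
   c_comp C (c_pair C f g) (c_pi1 C (c_cod C f) (c_cod C g)) = g"
  by (rule pair_raw) (auto simp: hom_def)

lemma pair_arr[simp]: "f \<in> c_arr C \<Longrightarrow> g \<in> c_arr C \<Longrightarrow> c_dom C f = c_dom C g \<Longrightarrow> c_pair C f g \<in> c_arr C"
  and pair_dom[simp]: "f \<in> c_arr C \<Longrightarrow> g \<in> c_arr C \<Longrightarrow> c_dom C f = c_dom C g \<Longrightarrow> c_dom C (c_pair C f g) = c_dom C f"
  and pair_cod[simp]: "f \<in> c_arr C \<Longrightarrow> g \<in> c_arr C \<Longrightarrow> c_dom C f = c_dom C g \<Longrightarrow> c_cod C (c_pair C f g) = c_prod C (c_cod C f) (c_cod C g)"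
  using pair_facts[of f g] by (auto simp: hom_def)

lemma pair_pi0[simp]: "f \<in> c_arr C \<Longrightarrow> g \<in> c_arr C \<Longrightarrow> c_dom C f = c_dom C g \<Longrightarrow> c_cod C f = A \<Longrightarrow> c_cod C g = B
   \<Longrightarrow> c_comp C (c_pair C f g) (c_pi0 C A B) = f"
  and pair_pi1[simp]: "f \<in> c_arr C \<Longrightarrow> g \<in> c_arr C \<Longrightarrow> c_dom C f = c_dom C g \<Longrightarrow> c_cod C f = A \<Longrightarrow> c_cod C g = B
   \<Longrightarrow> c_comp C (c_pair C f g) (c_pi1 C A B) = g"
  using pair_facts[of f g] by auto

lemma pair_pi0'[simp]: "f \<in> c_arr C \<Longrightarrow> g \<in> c_arr C \<Longrightarrow> c_dom C f = c_dom C g \<Longrightarrow> c_cod C f = A \<Longrightarrow> c_cod C g = B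
   \<Longrightarrow> h \<in> c_arr C \<Longrightarrow> c_dom C h = A \<Longrightarrow> c_comp C (c_pair C f g) (c_comp C (c_pi0 C A B) h) = c_comp C f h"
  by (subst assoc[symmetric]) auto
lemma pair_pi1'[simp]: "f \<in> c_arr C \<Longrightarrow> g \<in> c_arr C \<Longrightarrow> c_dom C f = c_dom C g \<Longrightarrow> c_cod C f = A \<Longrightarrow> c_cod C g = B
   \<Longrightarrow> h \<in> c_arr C \<Longrightarrow> c_dom C h = B \<Longrightarrow> c_comp C (c_pair C f g) (c_comp C (c_pi1 C A B) h) = c_comp C g h"
  by (subst assoc[symmetric]) auto

lemma pair_eta: "h \<in> c_arr C \<Longrightarrow> c_cod C h = c_prod C A B \<Longrightarrow> A \<in> c_obj C \<Longrightarrow> B \<in> c_obj C \<Longrightarrow>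
   c_pair C (c_comp C h (c_pi0 C A B)) (c_comp C h (c_pi1 C A B)) = h"
  using cart unfolding is_cartesian_def hom_def by auto

lemma pair_uniq: "h \<in> c_arr C \<Longrightarrow> c_cod C h = c_prod C A B \<Longrightarrow> A \<in> c_obj C \<Longrightarrow> B \<in> c_obj C \<Longrightarrow>
   c_comp C h (c_pi0 C A B) = f \<Longrightarrow> c_comp C h (c_pi1 C A B) = g \<Longrightarrow> h = c_pair C f g"
  using pair_eta by metis

lemma pair_ext: "h \<in> c_arr C \<Longrightarrow> k \<in> c_arr C \<Longrightarrow> c_cod C h = c_prod C A B \<Longrightarrow> c_cod C k = c_prod C A B \<Longrightarrow>
   A \<in> c_obj C \<Longrightarrow> B \<in> c_obj C \<Longrightarrow>
   c_comp C h (c_pi0 C A B) = c_comp C k (c_pi0 C A B) \<Longrightarrow> c_comp C h (c_pi1 C A B) = c_comp C k (c_pi1 C A B) \<Longrightarrow> h = k"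
  using pair_eta by metis

lemma pair_id[simp]: "A \<in> c_obj C \<Longrightarrow> B \<in> c_obj C \<Longrightarrow> c_pair C (c_pi0 C A B) (c_pi1 C A B) = c_id C (c_prod C A B)"
  using pair_eta[of "c_id C (c_prod C A B)" A B] by simp

lemma comp_pair[simp]: "h \<in> c_arr C \<Longrightarrow> f \<in> c_arr C \<Longrightarrow> g \<in> c_arr C \<Longrightarrow> c_cod C h = c_dom C f \<Longrightarrow> c_dom C f = c_dom C g
  \<Longrightarrow> c_comp C h (c_pair C f g) = c_pair C (c_comp C h f) (c_comp C h g)"
  by (rule pair_uniq[of _ "c_cod C f" "c_cod C g"]; simp)

lemma comp_pair'[simp]: "h \<in> c_arr C \<Longrightarrow> f \<in> c_arr C \<Longrightarrow> g \<in> c_arr C \<Longrightarrow> c_cod C h = c_dom C f \<Longrightarrow> c_dom C f = c_dom C g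
  \<Longrightarrow> k \<in> c_arr C \<Longrightarrow> c_dom C k = c_prod C (c_cod C f) (c_cod C g)
  \<Longrightarrow> c_comp C h (c_comp C (c_pair C f g) k) = c_comp C (c_pair C (c_comp C h f) (c_comp C h g)) k"
  by (subst assoc[symmetric]) auto

lemma add_hom: "f \<in> hom C A B \<Longrightarrow> g \<in> hom C A B \<Longrightarrow> c_add C f g \<in> hom C A B"
  using ladd unfolding is_left_additive_def by (elim conjE) blast
lemma add_arr[simp]: "f \<in> c_arr C \<Longrightarrow> g \<in> c_arr C \<Longrightarrow> c_dom C f = c_dom C g \<Longrightarrow> c_cod C f = c_cod C g \<Longrightarrow> c_add C f g \<in> c_arr C"
  and add_dom[simp]: "f \<in> c_arr C \<Longrightarrow> g \<in> c_arr C \<Longrightarrow> c_dom C f = c_dom C g \<Longrightarrow> c_cod C f = c_cod C g \<Longrightarrow> c_dom C (c_add C f g) = c_dom C f"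
  and add_cod[simp]: "f \<in> c_arr C \<Longrightarrow> g \<in> c_arr C \<Longrightarrow> c_dom C f = c_dom C g \<Longrightarrow> c_cod C f = c_cod C g \<Longrightarrow> c_cod C (c_add C f g) = c_cod C f"
  using add_hom[of f "c_dom C f" "c_cod C f" g] by (auto simp: hom_def)

lemma zero_arr[simp]: "A \<in> c_obj C \<Longrightarrow> B \<in> c_obj C \<Longrightarrow> c_zero C A B \<in> c_arr C"
  and zero_dom[simp]: "A \<in> c_obj C \<Longrightarrow> B \<in> c_obj C \<Longrightarrow> c_dom C (c_zero C A B) = A"
  and zero_cod[simp]: "A \<in> c_obj C \<Longrightarrow> B \<in> c_obj C \<Longrightarrow> c_cod C (c_zero C A B) = B"
  using ladd unfolding is_left_additive_def hom_def by auto

lemma add_assoc: "f \<in> hom C A B \<Longrightarrow> g \<in> hom C A B \<Longrightarrow> h \<in> hom C A B \<Longrightarrow>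
        c_add C (c_add C f g) h = c_add C f (c_add C g h)"
  and add_comm: "f \<in> hom C A B \<Longrightarrow> g \<in> hom C A B \<Longrightarrow> c_add C f g = c_add C g f"
  and add_zero: "f \<in> hom C A B \<Longrightarrow> c_add C f (c_zero C A B) = f"
proof -
  note L = ladd[unfolded is_left_additive_def]
  show "f \<in> hom C A B \<Longrightarrow> g \<in> hom C A B \<Longrightarrow> h \<in> hom C A B \<Longrightarrow>
        c_add C (c_add C f g) h = c_add C f (c_add C g h)" using L by meson
  show "f \<in> hom C A B \<Longrightarrow> g \<in> hom C A B \<Longrightarrow> c_add C f g = c_add C g f" using L by meson
  show "f \<in> hom C A B \<Longrightarrow> c_add C f (c_zero C A B) = f" using L by meson
qed

lemma add_zero_r[simp]: "f \<in> c_arr C \<Longrightarrow> c_dom C f = A \<Longrightarrow> c_cod C f = B \<Longrightarrow> c_add C f (c_zero C A B) = f"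
  using add_zero by (auto simp: hom_def)
lemma add_zero_l[simp]: "f \<in> c_arr C \<Longrightarrow> c_dom C f = A \<Longrightarrow> c_cod C f = B \<Longrightarrow> c_add C (c_zero C A B) f = f"
  using add_zero add_comm by (auto simp: hom_def)

lemma comp_add[simp]: "h \<in> c_arr C \<Longrightarrow> f \<in> c_arr C \<Longrightarrow> g \<in> c_arr C \<Longrightarrow> c_cod C h = c_dom C f \<Longrightarrow>
   c_dom C f = c_dom C g \<Longrightarrow> c_cod C f = c_cod C g \<Longrightarrow>
   c_comp C h (c_add C f g) = c_add C (c_comp C h f) (c_comp C h g)"
proof -
  assume a: "h \<in> c_arr C" "f \<in> c_arr C" "g \<in> c_arr C" "c_cod C h = c_dom C f"
   "c_dom C f = c_dom C g" "c_cod C f = c_cod C g"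
  have "\<forall>A B D f g h. f \<in> hom C A B \<longrightarrow> g \<in> hom C B D \<longrightarrow> h \<in> hom C B D \<longrightarrow>
        c_comp C f (c_add C g h) = c_add C (c_comp C f g) (c_comp C f h)"
    using ladd unfolding is_left_additive_def by (elim conjE) blast
  then show ?thesis using a by (auto simp: hom_def)
qed

lemma comp_zero[simp]: "h \<in> c_arr C \<Longrightarrow> c_cod C h = A \<Longrightarrow> B \<in> c_obj C \<Longrightarrow>
   c_comp C h (c_zero C A B) = c_zero C (c_dom C h) B"
  using ladd unfolding is_left_additive_def hom_def by auto

definition additive where
  "additive h \<longleftrightarrow> (\<forall>x y. x \<in> c_arr C \<longrightarrow> y \<in> c_arr C \<longrightarrow> c_dom C x = c_dom C y \<longrightarrow>
     c_cod C x = c_dom C h \<longrightarrow> c_cod C y = c_dom C h \<longrightarrow>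
     c_comp C (c_add C x y) h = c_add C (c_comp C x h) (c_comp C y h)) \<and>
    (\<forall>Z \<in> c_obj C. c_comp C (c_zero C Z (c_dom C h)) h = c_zero C Z (c_cod C h))"

lemma is_additive_iff: "h \<in> hom C X Y \<Longrightarrow> is_additive C X Y h \<longleftrightarrow> additive h"
  unfolding is_additive_def additive_def hom_def by auto

lemma pi0_additive: "A \<in> c_obj C \<Longrightarrow> B \<in> c_obj C \<Longrightarrow> additive (c_pi0 C A B)"
  and pi1_additive: "A \<in> c_obj C \<Longrightarrow> B \<in> c_obj C \<Longrightarrow> additive (c_pi1 C A B)"
  using ladd is_additive_iff unfolding is_left_additive_def by (auto simp: hom_def)

lemma additiveD1: "additive h \<Longrightarrow> x \<in> c_arr C \<Longrightarrow> y \<in> c_arr C \<Longrightarrow> c_dom C x = c_dom C y \<Longrightarrow>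
     c_cod C x = c_dom C h \<Longrightarrow> c_cod C y = c_dom C h \<Longrightarrow>
     c_comp C (c_add C x y) h = c_add C (c_comp C x h) (c_comp C y h)"
  and additiveD2: "additive h \<Longrightarrow> Z \<in> c_obj C \<Longrightarrow> c_dom C h = X \<Longrightarrow>
     c_comp C (c_zero C Z X) h = c_zero C Z (c_cod C h)"
  unfolding additive_def by auto

lemma add_pi0[simp]: "x \<in> c_arr C \<Longrightarrow> y \<in> c_arr C \<Longrightarrow> c_dom C x = c_dom C y \<Longrightarrow>
     c_cod C x = c_prod C A B \<Longrightarrow> c_cod C y = c_prod C A B \<Longrightarrow> A \<in> c_obj C \<Longrightarrow> B \<in> c_obj C \<Longrightarrow>
     c_comp C (c_add C x y) (c_pi0 C A B) = c_add C (c_comp C x (c_pi0 C A B)) (c_comp C y (c_pi0 C A B))"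
  and add_pi1[simp]: "x \<in> c_arr C \<Longrightarrow> y \<in> c_arr C \<Longrightarrow> c_dom C x = c_dom C y \<Longrightarrow>
     c_cod C x = c_prod C A B \<Longrightarrow> c_cod C y = c_prod C A B \<Longrightarrow> A \<in> c_obj C \<Longrightarrow> B \<in> c_obj C \<Longrightarrow>
     c_comp C (c_add C x y) (c_pi1 C A B) = c_add C (c_comp C x (c_pi1 C A B)) (c_comp C y (c_pi1 C A B))"
  by (rule additiveD1; simp add: pi0_additive pi1_additive)+

lemma zero_pi0[simp]: "Z \<in> c_obj C \<Longrightarrow> A \<in> c_obj C \<Longrightarrow> B \<in> c_obj C \<Longrightarrow>
     c_comp C (c_zero C Z (c_prod C A B)) (c_pi0 C A B) = c_zero C Z A"
  and zero_pi1[simp]: "Z \<in> c_obj C \<Longrightarrow> A \<in> c_obj C \<Longrightarrow> B \<in> c_obj C \<Longrightarrow>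
     c_comp C (c_zero C Z (c_prod C A B)) (c_pi1 C A B) = c_zero C Z B"
  using additiveD2[OF pi0_additive, of A B Z] additiveD2[OF pi1_additive, of A B Z] by auto

lemma pair_add: "f \<in> c_arr C \<Longrightarrow> g \<in> c_arr C \<Longrightarrow> f' \<in> c_arr C \<Longrightarrow> g' \<in> c_arr C \<Longrightarrow>
   c_dom C f = c_dom C g \<Longrightarrow> c_dom C f' = c_dom C f \<Longrightarrow> c_dom C g' = c_dom C f \<Longrightarrow>
   c_cod C f' = c_cod C f \<Longrightarrow> c_cod C g' = c_cod C g \<Longrightarrow>
   c_add C (c_pair C f g) (c_pair C f' g') = c_pair C (c_add C f f') (c_add C g g')"
  by (rule pair_uniq[of _ "c_cod C f" "c_cod C g"]; simp)

lemma pair_zero: "Z \<in> c_obj C \<Longrightarrow> A \<in> c_obj C \<Longrightarrow> B \<in> c_obj C \<Longrightarrow>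
   c_pair C (c_zero C Z A) (c_zero C Z B) = c_zero C Z (c_prod C A B)"
  by (rule pair_uniq[of _ A B, symmetric]; simp)

lemma iso_inv_facts: "is_iso C f \<Longrightarrow> iso_inv C f \<in> c_arr C \<and> c_dom C (iso_inv C f) = c_cod C f \<and>
   c_cod C (iso_inv C f) = c_dom C f \<and>
   c_comp C f (iso_inv C f) = c_id C (c_dom C f) \<and> c_comp C (iso_inv C f) f = c_id C (c_cod C f)"
proof -
  assume "is_iso C f"
  then obtain g where g: "g \<in> hom C (c_cod C f) (c_dom C f)" "c_comp C f g = c_id C (c_dom C f)"
     "c_comp C g f = c_id C (c_cod C f)" "f \<in> c_arr C" unfolding is_iso_def by blast
  let ?Q = "\<lambda>g. g \<in> hom C (c_cod C f) (c_dom C f) \<and>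
        c_comp C f g = c_id C (c_dom C f) \<and> c_comp C g f = c_id C (c_cod C f)"
  have "?Q (SOME g. ?Q g)" by (rule someI[of ?Q g]) (use g in auto)
  then show ?thesis unfolding iso_inv_def hom_def by auto
qed

lemma add_swap4: "a \<in> hom C X Y \<Longrightarrow> b \<in> hom C X Y \<Longrightarrow> c \<in> hom C X Y \<Longrightarrow> d \<in> hom C X Y \<Longrightarrow>
  c_add C (c_add C a b) (c_add C c d) = c_add C (c_add C a c) (c_add C b d)"
proof -
  assume h: "a \<in> hom C X Y" "b \<in> hom C X Y" "c \<in> hom C X Y" "d \<in> hom C X Y"
  have "c_add C (c_add C a b) (c_add C c d) = c_add C a (c_add C b (c_add C c d))"
    using h by (simp add: add_assoc add_hom)
  also have "c_add C b (c_add C c d) = c_add C (c_add C b c) d" using h by (simp add: add_assoc)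
  also have "c_add C b c = c_add C c b" using h by (simp add: add_comm)
  also have "c_add C (c_add C c b) d = c_add C c (c_add C b d)" using h by (simp add: add_assoc)
  also have "c_add C a (c_add C c (c_add C b d)) = c_add C (c_add C a c) (c_add C b d)"
    using h by (simp add: add_assoc add_hom)
  finally show ?thesis .
qed

lemma add2_iff: "additive_2nd C X A B f \<longleftrightarrow>
  (\<forall>x a1 a2. x \<in> c_arr C \<longrightarrow> a1 \<in> c_arr C \<longrightarrow> a2 \<in> c_arr C \<longrightarrow> c_cod C x = X \<longrightarrow>
     c_cod C a1 = A \<longrightarrow> c_cod C a2 = A \<longrightarrow> c_dom C a1 = c_dom C x \<longrightarrow> c_dom C a2 = c_dom C x \<longrightarrow>
     c_comp C (c_pair C x (c_add C a1 a2)) f =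
        c_add C (c_comp C (c_pair C x a1) f) (c_comp C (c_pair C x a2) f)) \<and>
  (\<forall>x. x \<in> c_arr C \<longrightarrow> c_cod C x = X \<longrightarrow>
        c_comp C (c_pair C x (c_zero C (c_dom C x) A)) f = c_zero C (c_dom C x) B)"
  unfolding additive_2nd_def hom_def by auto

lemma add2D1: "additive_2nd C X A B f \<Longrightarrow> x \<in> c_arr C \<Longrightarrow> a1 \<in> c_arr C \<Longrightarrow> a2 \<in> c_arr C \<Longrightarrow> c_cod C x = X \<Longrightarrow>
     c_cod C a1 = A \<Longrightarrow> c_cod C a2 = A \<Longrightarrow> c_dom C a1 = c_dom C x \<Longrightarrow> c_dom C a2 = c_dom C x \<Longrightarrow>
     c_comp C (c_pair C x (c_add C a1 a2)) f =
        c_add C (c_comp C (c_pair C x a1) f) (c_comp C (c_pair C x a2) f)"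
  and add2D2: "additive_2nd C X A B f \<Longrightarrow> x \<in> c_arr C \<Longrightarrow> c_cod C x = X \<Longrightarrow> W = c_dom C x \<Longrightarrow>
        c_comp C (c_pair C x (c_zero C W A)) f = c_zero C W B"
  unfolding add2_iff by blast+

lemma lens_arr_iff: "((A, A'), (B, B'), f, fs) \<in> lens_arr C \<longleftrightarrow>
   A \<in> c_obj C \<and> A' \<in> c_obj C \<and> B \<in> c_obj C \<and> B' \<in> c_obj C \<and>
   f \<in> c_arr C \<and> c_dom C f = A \<and> c_cod C f = B \<and>
   fs \<in> c_arr C \<and> c_dom C fs = c_prod C A B' \<and> c_cod C fs = A' \<and> additive_2nd C A B' A' fs"
  unfolding lens_arr_def hom_def by auto

lemma lens_pair_arr:
  assumes o: "Z \<in> c_obj C" "Z' \<in> c_obj C" "A \<in> c_obj C" "A' \<in> c_obj C" "B \<in> c_obj C" "B' \<in> c_obj C"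
    and l1: "((Z, Z'), (A, A'), f, fs) \<in> lens_arr C" and l2: "((Z, Z'), (B, B'), g, gs) \<in> lens_arr C"
  shows "lens_pair C ((Z, Z'), (A, A'), f, fs) ((Z, Z'), (B, B'), g, gs) \<in> lens_arr C"
proof -
  from l1 have f: "f \<in> c_arr C" "c_dom C f = Z" "c_cod C f = A" "fs \<in> c_arr C" "c_dom C fs = c_prod C Z A'"
    "c_cod C fs = Z'" "additive_2nd C Z A' Z' fs" by (auto simp: lens_arr_iff)
  from l2 have g: "g \<in> c_arr C" "c_dom C g = Z" "c_cod C g = B" "gs \<in> c_arr C" "c_dom C gs = c_prod C Z B'"
    "c_cod C gs = Z'" "additive_2nd C Z B' Z' gs" by (auto simp: lens_arr_iff)
  define P where "P = c_prod C A' B'"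
  have P: "P \<in> c_obj C" using o by (simp add: P_def)
  define T0 where "T0 = c_comp C (c_pair C (c_pi0 C Z P) (c_comp C (c_pi1 C Z P) (c_pi0 C A' B'))) fs"
  define T1 where "T1 = c_comp C (c_pair C (c_pi0 C Z P) (c_comp C (c_pi1 C Z P) (c_pi1 C A' B'))) gs"
  have T0: "T0 \<in> c_arr C" "c_dom C T0 = c_prod C Z P" "c_cod C T0 = Z'"
    unfolding T0_def using o f P by (simp_all add: P_def)
  have T1: "T1 \<in> c_arr C" "c_dom C T1 = c_prod C Z P" "c_cod C T1 = Z'"
    unfolding T1_def using o g P by (simp_all add: P_def)
  have eT0: "c_comp C (c_pair C x a) T0 = c_comp C (c_pair C x (c_comp C a (c_pi0 C A' B'))) fs"
    if "x \<in> c_arr C" "a \<in> c_arr C" "c_cod C x = Z" "c_cod C a = P" "c_dom C a = c_dom C x" for x a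
    unfolding T0_def using that o f P by (simp add: P_def)
  have eT1: "c_comp C (c_pair C x a) T1 = c_comp C (c_pair C x (c_comp C a (c_pi1 C A' B'))) gs"
    if "x \<in> c_arr C" "a \<in> c_arr C" "c_cod C x = Z" "c_cod C a = P" "c_dom C a = c_dom C x" for x a
    unfolding T1_def using that o g P by (simp add: P_def)
  have add2: "additive_2nd C Z P Z' (c_add C T0 T1)"
    unfolding add2_iff
  proof (intro conjI allI impI)
    fix x a1 a2 assume a: "x \<in> c_arr C" "a1 \<in> c_arr C" "a2 \<in> c_arr C" "c_cod C x = Z"
      "c_cod C a1 = P" "c_cod C a2 = P" "c_dom C a1 = c_dom C x" "c_dom C a2 = c_dom C x"
    have s0: "c_comp C (c_pair C x (c_add C a1 a2)) T0 =
       c_add C (c_comp C (c_pair C x a1) T0) (c_comp C (c_pair C x a2) T0)"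
      using a o P by (simp add: eT0 P_def add2D1[OF f(7)])
    have s1: "c_comp C (c_pair C x (c_add C a1 a2)) T1 =
       c_add C (c_comp C (c_pair C x a1) T1) (c_comp C (c_pair C x a2) T1)"
      using a o P by (simp add: eT1 P_def add2D1[OF g(7)])
    show "c_comp C (c_pair C x (c_add C a1 a2)) (c_add C T0 T1) =
       c_add C (c_comp C (c_pair C x a1) (c_add C T0 T1)) (c_comp C (c_pair C x a2) (c_add C T0 T1))"
      using a T0 T1 o P by (simp add: s0 s1 add_swap4[where X="c_dom C x" and Y=Z'] hom_def)
  next
    fix x assume a: "x \<in> c_arr C" "c_cod C x = Z"
    have "c_comp C (c_pair C x (c_zero C (c_dom C x) P)) T0 = c_zero C (c_dom C x) Z'"
      using a o P by (simp add: eT0 P_def add2D2[OF f(7)])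
    moreover have "c_comp C (c_pair C x (c_zero C (c_dom C x) P)) T1 = c_zero C (c_dom C x) Z'"
      using a o P by (simp add: eT1 P_def add2D2[OF g(7)])
    ultimately show "c_comp C (c_pair C x (c_zero C (c_dom C x) P)) (c_add C T0 T1) = c_zero C (c_dom C x) Z'"
      using a T0 T1 o P by simp
  qed
  show ?thesis
    using o f g T0 T1 add2 P unfolding lens_pair.simps lens_arr_iff T0_def[symmetric] T1_def[symmetric] P_def[symmetric]
    by simp
qed

end

locale clf = C: cl C + D: cl D for C :: "('o, 'a) clac" and D :: "('p, 'b) clac" +
  fixes Fo :: "'o \<Rightarrow> 'p" and Fa :: "'a \<Rightarrow> 'b"
  assumes F: "clac_functor C D Fo Fa"
begin

lemma Ff: "is_functor C D Fo Fa" and Fp: "preserves_products C D Fo Fa" and Fadd: "preserves_additive C D Fo Fa"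
  using F unfolding clac_functor_def by auto

lemma F_obj[simp]: "A \<in> c_obj C \<Longrightarrow> Fo A \<in> c_obj D"
  using Ff unfolding is_functor_def by auto

lemma F_hom: "f \<in> c_arr C \<Longrightarrow> Fa f \<in> hom D (Fo (c_dom C f)) (Fo (c_cod C f))"
  using Ff unfolding is_functor_def hom_def by auto

lemma F_arr[simp]: "f \<in> c_arr C \<Longrightarrow> Fa f \<in> c_arr D"
  and F_dom[simp]: "f \<in> c_arr C \<Longrightarrow> c_dom D (Fa f) = Fo (c_dom C f)"
  and F_cod[simp]: "f \<in> c_arr C \<Longrightarrow> c_cod D (Fa f) = Fo (c_cod C f)"
  using F_hom[of f] by (auto simp: hom_def)

lemma F_id[simp]: "A \<in> c_obj C \<Longrightarrow> Fa (c_id C A) = c_id D (Fo A)"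
  using Ff unfolding is_functor_def by auto

lemma F_comp: "f \<in> c_arr C \<Longrightarrow> g \<in> c_arr C \<Longrightarrow> c_cod C f = c_dom C g \<Longrightarrow>
   Fa (c_comp C f g) = c_comp D (Fa f) (Fa g)"
proof -
  assume a: "f \<in> c_arr C" "g \<in> c_arr C" "c_cod C f = c_dom C g"
  have X: "\<forall>A B E f g. f \<in> hom C A B \<longrightarrow> g \<in> hom C B E \<longrightarrow>
        Fa (c_comp C f g) = c_comp D (Fa f) (Fa g)" using Ff unfolding is_functor_def by (elim conjE)
  show ?thesis using X[rule_format, of f "c_dom C f" "c_cod C f" g "c_cod C g"] a by (simp add: hom_def)
qed

lemma F_fold[simp]: "f \<in> c_arr C \<Longrightarrow> g \<in> c_arr C \<Longrightarrow> c_cod C f = c_dom C g \<Longrightarrow>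
   c_comp D (Fa f) (Fa g) = Fa (c_comp C f g)"
  by (simp add: F_comp)

lemma F_fold'[simp]: "f \<in> c_arr C \<Longrightarrow> g \<in> c_arr C \<Longrightarrow> c_cod C f = c_dom C g \<Longrightarrow>
   h \<in> c_arr D \<Longrightarrow> c_dom D h = Fo (c_cod C g) \<Longrightarrow>
   c_comp D (Fa f) (c_comp D (Fa g) h) = c_comp D (Fa (c_comp C f g)) h"
  by (simp add: F_comp del: F_fold)

lemma F_add[simp]: "f \<in> c_arr C \<Longrightarrow> g \<in> c_arr C \<Longrightarrow> c_dom C f = c_dom C g \<Longrightarrow> c_cod C f = c_cod C g \<Longrightarrow>
   Fa (c_add C f g) = c_add D (Fa f) (Fa g)"
proof -
  assume a: "f \<in> c_arr C" "g \<in> c_arr C" "c_dom C f = c_dom C g" "c_cod C f = c_cod C g"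
  have X: "\<forall>A B f g. f \<in> hom C A B \<longrightarrow> g \<in> hom C A B \<longrightarrow>
        Fa (c_add C f g) = c_add D (Fa f) (Fa g)" using Fadd unfolding preserves_additive_def by (elim conjE)
  show ?thesis using X[rule_format, of f "c_dom C f" "c_cod C f" g] a by (simp add: hom_def)
qed

lemma F_zero[simp]: "A \<in> c_obj C \<Longrightarrow> B \<in> c_obj C \<Longrightarrow> Fa (c_zero C A B) = c_zero D (Fo A) (Fo B)"
  using Fadd unfolding preserves_additive_def by auto

definition phi where "phi A B = c_pair D (Fa (c_pi0 C A B)) (Fa (c_pi1 C A B))"
definition psi where "psi A B = iso_inv D (phi A B)"
definition beta where "beta = iso_inv D (c_bang D (Fo (c_term C)))"

lemma phi_arr[simp]: "A \<in> c_obj C \<Longrightarrow> B \<in> c_obj C \<Longrightarrow> phi A B \<in> c_arr D"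
  and phi_dom[simp]: "A \<in> c_obj C \<Longrightarrow> B \<in> c_obj C \<Longrightarrow> c_dom D (phi A B) = Fo (c_prod C A B)"
  and phi_cod[simp]: "A \<in> c_obj C \<Longrightarrow> B \<in> c_obj C \<Longrightarrow> c_cod D (phi A B) = c_prod D (Fo A) (Fo B)"
  unfolding phi_def by simp_all

lemma phi_pi0[simp]: "A \<in> c_obj C \<Longrightarrow> B \<in> c_obj C \<Longrightarrow> c_comp D (phi A B) (c_pi0 D (Fo A) (Fo B)) = Fa (c_pi0 C A B)"
  and phi_pi1[simp]: "A \<in> c_obj C \<Longrightarrow> B \<in> c_obj C \<Longrightarrow> c_comp D (phi A B) (c_pi1 D (Fo A) (Fo B)) = Fa (c_pi1 C A B)"
  unfolding phi_def by simp_all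

lemma phi_iso: "A \<in> c_obj C \<Longrightarrow> B \<in> c_obj C \<Longrightarrow> is_iso D (phi A B)"
  using Fp unfolding preserves_products_def phi_def by auto

lemma psi_facts: "A \<in> c_obj C \<Longrightarrow> B \<in> c_obj C \<Longrightarrow> psi A B \<in> c_arr D \<and> c_dom D (psi A B) = c_prod D (Fo A) (Fo B) \<and>
   c_cod D (psi A B) = Fo (c_prod C A B) \<and>
   c_comp D (phi A B) (psi A B) = c_id D (Fo (c_prod C A B)) \<and> c_comp D (psi A B) (phi A B) = c_id D (c_prod D (Fo A) (Fo B))"
  using D.iso_inv_facts[OF phi_iso] unfolding psi_def by simp

lemma psi_arr[simp]: "A \<in> c_obj C \<Longrightarrow> B \<in> c_obj C \<Longrightarrow> psi A B \<in> c_arr D"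
  and psi_dom[simp]: "A \<in> c_obj C \<Longrightarrow> B \<in> c_obj C \<Longrightarrow> c_dom D (psi A B) = c_prod D (Fo A) (Fo B)"
  and psi_cod[simp]: "A \<in> c_obj C \<Longrightarrow> B \<in> c_obj C \<Longrightarrow> c_cod D (psi A B) = Fo (c_prod C A B)"
  and phi_psi[simp]: "A \<in> c_obj C \<Longrightarrow> B \<in> c_obj C \<Longrightarrow> c_comp D (phi A B) (psi A B) = c_id D (Fo (c_prod C A B))"
  and psi_phi[simp]: "A \<in> c_obj C \<Longrightarrow> B \<in> c_obj C \<Longrightarrow> c_comp D (psi A B) (phi A B) = c_id D (c_prod D (Fo A) (Fo B))"
  using psi_facts by auto

lemma phi_psi'[simp]: "A \<in> c_obj C \<Longrightarrow> B \<in> c_obj C \<Longrightarrow> h \<in> c_arr D \<Longrightarrow> c_dom D h = Fo (c_prod C A B) \<Longrightarrow>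
   c_comp D (phi A B) (c_comp D (psi A B) h) = h"
  and psi_phi'[simp]: "A \<in> c_obj C \<Longrightarrow> B \<in> c_obj C \<Longrightarrow> h \<in> c_arr D \<Longrightarrow> c_dom D h = c_prod D (Fo A) (Fo B) \<Longrightarrow>
   c_comp D (psi A B) (c_comp D (phi A B) h) = h"
  by (subst D.assoc[symmetric]; simp)+

lemma psi_pi0[simp]: "A \<in> c_obj C \<Longrightarrow> B \<in> c_obj C \<Longrightarrow> c_comp D (psi A B) (Fa (c_pi0 C A B)) = c_pi0 D (Fo A) (Fo B)"
proof -
  assume o: "A \<in> c_obj C" "B \<in> c_obj C"
  have "c_comp D (psi A B) (Fa (c_pi0 C A B)) = c_comp D (psi A B) (c_comp D (phi A B) (c_pi0 D (Fo A) (Fo B)))"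
    using o by simp
  also have "\<dots> = c_pi0 D (Fo A) (Fo B)" using o by (simp del: phi_pi0)
  finally show ?thesis .
qed

lemma psi_pi1[simp]: "A \<in> c_obj C \<Longrightarrow> B \<in> c_obj C \<Longrightarrow> c_comp D (psi A B) (Fa (c_pi1 C A B)) = c_pi1 D (Fo A) (Fo B)"
proof -
  assume o: "A \<in> c_obj C" "B \<in> c_obj C"
  have "c_comp D (psi A B) (Fa (c_pi1 C A B)) = c_comp D (psi A B) (c_comp D (phi A B) (c_pi1 D (Fo A) (Fo B)))"
    using o by simp
  also have "\<dots> = c_pi1 D (Fo A) (Fo B)" using o by (simp del: phi_pi1)
  finally show ?thesis .
qed

lemma psi_pi0'[simp]: "A \<in> c_obj C \<Longrightarrow> B \<in> c_obj C \<Longrightarrow> h \<in> c_arr D \<Longrightarrow> c_dom D h = Fo A \<Longrightarrow>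
   c_comp D (psi A B) (c_comp D (Fa (c_pi0 C A B)) h) = c_comp D (c_pi0 D (Fo A) (Fo B)) h"
  and psi_pi1'[simp]: "A \<in> c_obj C \<Longrightarrow> B \<in> c_obj C \<Longrightarrow> h \<in> c_arr D \<Longrightarrow> c_dom D h = Fo B \<Longrightarrow>
   c_comp D (psi A B) (c_comp D (Fa (c_pi1 C A B)) h) = c_comp D (c_pi1 D (Fo A) (Fo B)) h"
  by (subst D.assoc[symmetric]; simp)+

lemma psi_pi0F[simp]: "A \<in> c_obj C \<Longrightarrow> B \<in> c_obj C \<Longrightarrow> h \<in> c_arr C \<Longrightarrow> c_dom C h = A \<Longrightarrow>
   c_comp D (psi A B) (Fa (c_comp C (c_pi0 C A B) h)) = c_comp D (c_pi0 D (Fo A) (Fo B)) (Fa h)"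
  and psi_pi1F[simp]: "A \<in> c_obj C \<Longrightarrow> B \<in> c_obj C \<Longrightarrow> h \<in> c_arr C \<Longrightarrow> c_dom C h = B \<Longrightarrow>
   c_comp D (psi A B) (Fa (c_comp C (c_pi1 C A B) h)) = c_comp D (c_pi1 D (Fo A) (Fo B)) (Fa h)"
  by (simp_all add: F_comp del: F_fold F_fold')

lemma psi_pi0F'[simp]: "A \<in> c_obj C \<Longrightarrow> B \<in> c_obj C \<Longrightarrow> h \<in> c_arr C \<Longrightarrow> c_dom C h = A \<Longrightarrow>
   k \<in> c_arr D \<Longrightarrow> c_dom D k = Fo (c_cod C h) \<Longrightarrow>
   c_comp D (psi A B) (c_comp D (Fa (c_comp C (c_pi0 C A B) h)) k) = c_comp D (c_pi0 D (Fo A) (Fo B)) (c_comp D (Fa h) k)"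
proof -
  assume a: "A \<in> c_obj C" "B \<in> c_obj C" "h \<in> c_arr C" "c_dom C h = A" "k \<in> c_arr D" "c_dom D k = Fo (c_cod C h)"
  have "c_comp D (psi A B) (c_comp D (Fa (c_comp C (c_pi0 C A B) h)) k) =
     c_comp D (c_comp D (psi A B) (Fa (c_comp C (c_pi0 C A B) h))) k"
    using a by (intro D.assoc[symmetric]) simp_all
  also have "\<dots> = c_comp D (c_comp D (c_pi0 D (Fo A) (Fo B)) (Fa h)) k" using a by (simp only: psi_pi0F)
  also have "\<dots> = c_comp D (c_pi0 D (Fo A) (Fo B)) (c_comp D (Fa h) k)" using a by (intro D.assoc) simp_all
  finally show ?thesis .
qed

lemma psi_pi1F'[simp]: "A \<in> c_obj C \<Longrightarrow> B \<in> c_obj C \<Longrightarrow> h \<in> c_arr C \<Longrightarrow> c_dom C h = B \<Longrightarrow>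
   k \<in> c_arr D \<Longrightarrow> c_dom D k = Fo (c_cod C h) \<Longrightarrow>
   c_comp D (psi A B) (c_comp D (Fa (c_comp C (c_pi1 C A B) h)) k) = c_comp D (c_pi1 D (Fo A) (Fo B)) (c_comp D (Fa h) k)"
proof -
  assume a: "A \<in> c_obj C" "B \<in> c_obj C" "h \<in> c_arr C" "c_dom C h = B" "k \<in> c_arr D" "c_dom D k = Fo (c_cod C h)"
  have "c_comp D (psi A B) (c_comp D (Fa (c_comp C (c_pi1 C A B) h)) k) =
     c_comp D (c_comp D (psi A B) (Fa (c_comp C (c_pi1 C A B) h))) k"
    using a by (intro D.assoc[symmetric]) simp_all
  also have "\<dots> = c_comp D (c_comp D (c_pi1 D (Fo A) (Fo B)) (Fa h)) k" using a by (simp only: psi_pi1F)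
  also have "\<dots> = c_comp D (c_pi1 D (Fo A) (Fo B)) (c_comp D (Fa h) k)" using a by (intro D.assoc) simp_all
  finally show ?thesis .
qed

lemma beta_facts: "beta \<in> c_arr D \<and> c_dom D beta = c_term D \<and> c_cod D beta = Fo (c_term C) \<and>
   c_comp D (c_bang D (Fo (c_term C))) beta = c_id D (Fo (c_term C)) \<and>
   c_comp D beta (c_bang D (Fo (c_term C))) = c_id D (c_term D)"
proof -
  have "is_iso D (c_bang D (Fo (c_term C)))" using Fp unfolding preserves_products_def by (elim conjE)
  from D.iso_inv_facts[OF this] show ?thesis unfolding beta_def by simp
qed

lemma beta_arr[simp]: "beta \<in> c_arr D" and beta_dom[simp]: "c_dom D beta = c_term D"
  and beta_cod[simp]: "c_cod D beta = Fo (c_term C)"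
  using beta_facts by auto

lemma into_Fterm: "h \<in> c_arr D \<Longrightarrow> k \<in> c_arr D \<Longrightarrow> c_cod D h = Fo (c_term C) \<Longrightarrow> c_cod D k = Fo (c_term C)
  \<Longrightarrow> c_dom D h = c_dom D k \<Longrightarrow> h = k"
proof -
  assume a: "h \<in> c_arr D" "k \<in> c_arr D" "c_cod D h = Fo (c_term C)" "c_cod D k = Fo (c_term C)" "c_dom D h = c_dom D k"
  have e: "x = c_comp D (c_bang D (c_dom D x)) beta" if "x \<in> c_arr D" "c_cod D x = Fo (c_term C)" for x
  proof -
    have "x = c_comp D x (c_comp D (c_bang D (Fo (c_term C))) beta)" using beta_facts that by simp
    also have "\<dots> = c_comp D (c_comp D x (c_bang D (Fo (c_term C)))) beta" using that by simp
    also have "c_comp D x (c_bang D (Fo (c_term C))) = c_bang D (c_dom D x)"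
      using that D.bang_uniq[of "c_comp D x (c_bang D (Fo (c_term C)))"] by simp
    finally show ?thesis .
  qed
  have "h = c_comp D (c_bang D (c_dom D h)) beta" using e[of h] a by blast
  also have "\<dots> = k" using e[of k] a by metis
  finally show ?thesis .
qed

lemma zero_factor: "Z \<in> c_obj D \<Longrightarrow> X \<in> c_obj C \<Longrightarrow>
   c_zero D Z (Fo X) = c_comp D (c_bang D Z) (c_comp D beta (Fa (c_zero C (c_term C) X)))"
  by simp

lemma F_additive: assumes h: "h \<in> c_arr C" "C.additive h" shows "D.additive (Fa h)"
  unfolding D.additive_def
proof (intro conjI allI impI ballI)
  fix x y assume a: "x \<in> c_arr D" "y \<in> c_arr D" "c_dom D x = c_dom D y" "c_cod D x = c_dom D (Fa h)"
    "c_cod D y = c_dom D (Fa h)"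
  define X where "X = c_dom C h"
  have X: "X \<in> c_obj C" using h by (simp add: X_def)
  define u where "u = c_comp D (c_pair D x y) (psi X X)"
  have u: "u \<in> c_arr D" "c_dom D u = c_dom D x" "c_cod D u = Fo (c_prod C X X)"
    using a X h by (simp_all add: u_def X_def)
  have ux: "c_comp D u (Fa (c_pi0 C X X)) = x" and uy: "c_comp D u (Fa (c_pi1 C X X)) = y"
    using a X h by (simp_all add: u_def X_def)
  have xy: "c_add D x y = c_comp D u (Fa (c_add C (c_pi0 C X X) (c_pi1 C X X)))"
    using u X by (simp add: ux uy)
  have "c_comp D (c_add D x y) (Fa h) = c_comp D u (Fa (c_comp C (c_add C (c_pi0 C X X) (c_pi1 C X X)) h))"
    unfolding xy using u X h by (simp add: X_def del: F_add)
  also have "c_comp C (c_add C (c_pi0 C X X) (c_pi1 C X X)) h =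
     c_add C (c_comp C (c_pi0 C X X) h) (c_comp C (c_pi1 C X X) h)"
    using h X by (intro C.additiveD1) (simp_all add: X_def)
  also have "c_comp D u (Fa \<dots>) = c_add D (c_comp D x (Fa h)) (c_comp D y (Fa h))"
    using u X h by (simp add: ux[symmetric] uy[symmetric] X_def F_comp del: F_fold F_fold')
  finally show "c_comp D (c_add D x y) (Fa h) = c_add D (c_comp D x (Fa h)) (c_comp D y (Fa h))" .
next
  fix Z assume Z: "Z \<in> c_obj D"
  define X where "X = c_dom C h"
  have X: "X \<in> c_obj C" using h by (simp add: X_def)
  have zf: "c_zero D Z (c_dom D (Fa h)) = c_comp D (c_bang D Z) (c_comp D beta (Fa (c_zero C (c_term C) X)))"
    using zero_factor[OF Z X] h by (simp add: X_def)
  have "c_comp D (c_zero D Z (c_dom D (Fa h))) (Fa h) =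
     c_comp D (c_bang D Z) (c_comp D beta (Fa (c_comp C (c_zero C (c_term C) X) h)))"
    unfolding zf using Z X h by (simp add: X_def del: F_zero)
  also have "c_comp C (c_zero C (c_term C) X) h = c_zero C (c_term C) (c_cod C h)"
    using h by (intro C.additiveD2) (simp_all add: X_def)
  also have "c_comp D (c_bang D Z) (c_comp D beta (Fa \<dots>)) = c_zero D Z (c_cod D (Fa h))"
    using Z h by simp
  finally show "c_comp D (c_zero D Z (c_dom D (Fa h))) (Fa h) = c_zero D Z (c_cod D (Fa h))" .
qed

end

context clf begin

lemma transport:
  assumes o: "W \<in> c_obj C" "A \<in> c_obj C" "B \<in> c_obj C"
    and g: "g \<in> c_arr C" "c_dom C g = W" "c_cod C g = c_prod C A B"
    and u: "u \<in> c_arr D" "c_cod D u = Fo W"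
    and k: "k \<in> c_arr D" "c_dom D k = Fo (c_prod C A B)"
  shows "c_comp D u (c_comp D (Fa g) k) =
    c_comp D (c_pair D (c_comp D u (Fa (c_comp C g (c_pi0 C A B)))) (c_comp D u (Fa (c_comp C g (c_pi1 C A B)))))
      (c_comp D (psi A B) k)"
proof -
  have "c_pair D (c_comp D u (Fa (c_comp C g (c_pi0 C A B)))) (c_comp D u (Fa (c_comp C g (c_pi1 C A B))))
     = c_comp D u (c_comp D (Fa g) (phi A B))"
    unfolding phi_def using o g u by simp
  then show ?thesis using o g u k by simp
qed

lemma transport_F:
  assumes o: "W \<in> c_obj C" "A \<in> c_obj C" "B \<in> c_obj C"
    and g: "g \<in> c_arr C" "c_dom C g = W" "c_cod C g = c_prod C A B"
    and u: "u \<in> c_arr D" "c_cod D u = Fo W"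
    and k: "k \<in> c_arr C" "c_dom C k = c_prod C A B"
  shows "c_comp D u (Fa (c_comp C g k)) =
    c_comp D (c_pair D (c_comp D u (Fa (c_comp C g (c_pi0 C A B)))) (c_comp D u (Fa (c_comp C g (c_pi1 C A B)))))
      (c_comp D (psi A B) (Fa k))"
  using transport[OF o g u, of "Fa k"] o g u k by (simp add: F_comp del: F_fold F_fold')

lemma add2_F:
  assumes o: "A \<in> c_obj C" "B' \<in> c_obj C" "A' \<in> c_obj C"
    and fs: "fs \<in> c_arr C" "c_dom C fs = c_prod C A B'" "c_cod C fs = A'" "additive_2nd C A B' A' fs"
  shows "additive_2nd D (Fo A) (Fo B') (Fo A') (c_comp D (psi A B') (Fa fs))"
  unfolding D.add2_iff
proof (intro conjI allI impI)
  fix x a1 a2 assume a: "x \<in> c_arr D" "a1 \<in> c_arr D" "a2 \<in> c_arr D" "c_cod D x = Fo A"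
    "c_cod D a1 = Fo B'" "c_cod D a2 = Fo B'" "c_dom D a1 = c_dom D x" "c_dom D a2 = c_dom D x"
  define BB where "BB = c_prod C B' B'"
  define W where "W = c_prod C A BB"
  have ob: "BB \<in> c_obj C" "W \<in> c_obj C" using o by (simp_all add: BB_def W_def)
  define p where "p = c_pi0 C A BB"
  define q1 where "q1 = c_comp C (c_pi1 C A BB) (c_pi0 C B' B')"
  define q2 where "q2 = c_comp C (c_pi1 C A BB) (c_pi1 C B' B')"
  have pq: "p \<in> c_arr C" "c_dom C p = W" "c_cod C p = A"
     "q1 \<in> c_arr C" "c_dom C q1 = W" "c_cod C q1 = B'"
     "q2 \<in> c_arr C" "c_dom C q2 = W" "c_cod C q2 = B'"
    using o ob by (simp_all add: p_def q1_def q2_def W_def BB_def)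
  define u where "u = c_comp D (c_pair D x (c_comp D (c_pair D a1 a2) (psi B' B'))) (psi A BB)"
  have u: "u \<in> c_arr D" "c_dom D u = c_dom D x" "c_cod D u = Fo W"
    using a o ob by (simp_all add: u_def W_def BB_def)
  have ux: "c_comp D u (Fa p) = x" and ua1: "c_comp D u (Fa q1) = a1" and ua2: "c_comp D u (Fa q2) = a2"
    using a o ob by (simp_all add: u_def p_def q1_def q2_def BB_def del: F_fold F_fold')
  have G: "c_comp D u (Fa (c_comp C (c_pair C p q) fs)) = c_comp D (c_pair D (c_comp D u (Fa p)) (c_comp D u (Fa q)))
      (c_comp D (psi A B') (Fa fs))" if q: "q \<in> c_arr C" "c_dom C q = W" "c_cod C q = B'" for q
    using transport_F[OF ob(2) o(1,2) _ _ _ u(1,3) fs(1,2), of "c_pair C p q"] pq q o by simp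
  have "c_comp D (c_pair D x (c_add D a1 a2)) (c_comp D (psi A B') (Fa fs)) =
     c_comp D u (Fa (c_comp C (c_pair C p (c_add C q1 q2)) fs))"
    using G[of "c_add C q1 q2"] pq u by (simp add: ux ua1 ua2)
  also have "c_comp C (c_pair C p (c_add C q1 q2)) fs =
     c_add C (c_comp C (c_pair C p q1) fs) (c_comp C (c_pair C p q2) fs)"
    using pq by (intro C.add2D1[OF fs(4)]) simp_all
  also have "c_comp D u (Fa \<dots>) = c_add D (c_comp D u (Fa (c_comp C (c_pair C p q1) fs)))
      (c_comp D u (Fa (c_comp C (c_pair C p q2) fs)))"
    using pq u fs o by (simp del: F_fold F_fold')
  also have "\<dots> = c_add D (c_comp D (c_pair D x a1) (c_comp D (psi A B') (Fa fs)))
      (c_comp D (c_pair D x a2) (c_comp D (psi A B') (Fa fs)))"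
    using G[of q1] G[of q2] pq by (simp only: ux ua1 ua2)
  finally show "c_comp D (c_pair D x (c_add D a1 a2)) (c_comp D (psi A B') (Fa fs)) =
     c_add D (c_comp D (c_pair D x a1) (c_comp D (psi A B') (Fa fs)))
      (c_comp D (c_pair D x a2) (c_comp D (psi A B') (Fa fs)))" .
next
  fix x assume a: "x \<in> c_arr D" "c_cod D x = Fo A"
  define g where "g = c_pair C (c_id C A) (c_zero C A B')"
  have g: "g \<in> c_arr C" "c_dom C g = A" "c_cod C g = c_prod C A B'" using o by (simp_all add: g_def)
  have "c_comp D x (Fa (c_comp C g fs)) = c_comp D (c_pair D x (c_zero D (c_dom D x) (Fo B'))) (c_comp D (psi A B') (Fa fs))"
    using transport_F[OF o(1,1,2) g a fs(1,2)] o a by (simp add: g_def)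
  moreover have "c_comp C g fs = c_zero C A A'"
    unfolding g_def using C.add2D2[OF fs(4), of "c_id C A" A] o by simp
  ultimately show "c_comp D (c_pair D x (c_zero D (c_dom D x) (Fo B'))) (c_comp D (psi A B') (Fa fs)) =
     c_zero D (c_dom D x) (Fo A')" using a o by simp
qed

end

lemma LensA_simps[simp]: "c_obj (LensA C) = c_obj C \<times> c_obj C" "c_arr (LensA C) = lens_arr C"
  "c_dom (LensA C) = (\<lambda>(a, b, f, fs). a)" "c_cod (LensA C) = (\<lambda>(a, b, f, fs). b)"
  "c_id (LensA C) = lens_id C" "c_comp (LensA C) = lens_comp C" "c_term (LensA C) = (c_term C, c_term C)"
  "c_bang (LensA C) = lens_bang C" "c_prod (LensA C) = lens_prod C" "c_pi0 (LensA C) = lens_pi0 C"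
  "c_pi1 (LensA C) = lens_pi1 C" "c_pair (LensA C) = lens_pair C" "c_add (LensA C) = lens_add C"
  "c_zero (LensA C) = lens_zero C"
  by (simp_all add: LensA_def)

lemma hom_LensA: "((A, A'), (B, B'), f, fs) \<in> hom (LensA C) X Y \<longleftrightarrow>
   ((A, A'), (B, B'), f, fs) \<in> lens_arr C \<and> X = (A, A') \<and> Y = (B, B')"
  by (auto simp: hom_def)

lemma is_iso_LensA_intro:
  assumes "((A, A'), (B, B'), f, fs) \<in> lens_arr D" "((B, B'), (A, A'), g, gs) \<in> lens_arr D"
    "lens_comp D ((A, A'), (B, B'), f, fs) ((B, B'), (A, A'), g, gs) = lens_id D (A, A')"
    "lens_comp D ((B, B'), (A, A'), g, gs) ((A, A'), (B, B'), f, fs) = lens_id D (B, B')"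
  shows "is_iso (LensA D) ((A, A'), (B, B'), f, fs)"
  unfolding is_iso_def using assms by (auto simp: hom_LensA intro!: bexI[of _ "((B, B'), (A, A'), g, gs)"])

context cl begin

lemma lens_pi0_arr: "A \<in> c_obj C \<Longrightarrow> A' \<in> c_obj C \<Longrightarrow> B \<in> c_obj C \<Longrightarrow> B' \<in> c_obj C \<Longrightarrow>
   lens_pi0 C (A, A') (B, B') \<in> lens_arr C"
  unfolding lens_pi0.simps lens_arr_iff add2_iff by (simp add: pair_add pair_zero)

lemma lens_pi1_arr: "A \<in> c_obj C \<Longrightarrow> A' \<in> c_obj C \<Longrightarrow> B \<in> c_obj C \<Longrightarrow> B' \<in> c_obj C \<Longrightarrow>
   lens_pi1 C (A, A') (B, B') \<in> lens_arr C"
  unfolding lens_pi1.simps lens_arr_iff add2_iff by (simp add: pair_add pair_zero)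

end

context clf begin

lemma LensA_arr'[simp]: "LensA_arr C D Fo Fa ((A, A'), (B, B'), f, fs) =
   ((Fo A, Fo A'), (Fo B, Fo B'), Fa f, c_comp D (psi A B') (Fa fs))"
  by (simp add: psi_def phi_def)

declare LensA_arr.simps[simp del]

lemma lensF_arr: "((A, A'), (B, B'), f, fs) \<in> lens_arr C \<Longrightarrow>
   LensA_arr C D Fo Fa ((A, A'), (B, B'), f, fs) \<in> lens_arr D"
  unfolding LensA_arr' C.lens_arr_iff D.lens_arr_iff by (simp add: add2_F)

lemma lensF_id: "A \<in> c_obj C \<Longrightarrow> A' \<in> c_obj C \<Longrightarrow>
   LensA_arr C D Fo Fa (lens_id C (A, A')) = lens_id D (Fo A, Fo A')"
  by simp

lemma lensF_comp:
  assumes l1: "((A, A'), (B, B'), f, fs) \<in> lens_arr C" and l2: "((B, B'), (E, E'), g, gs) \<in> lens_arr C"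
  shows "LensA_arr C D Fo Fa (lens_comp C ((A, A'), (B, B'), f, fs) ((B, B'), (E, E'), g, gs)) =
     lens_comp D (LensA_arr C D Fo Fa ((A, A'), (B, B'), f, fs)) (LensA_arr C D Fo Fa ((B, B'), (E, E'), g, gs))"
proof -
  from l1 have f: "A \<in> c_obj C" "A' \<in> c_obj C" "B \<in> c_obj C" "B' \<in> c_obj C" "f \<in> c_arr C" "c_dom C f = A" "c_cod C f = B" "fs \<in> c_arr C" "c_dom C fs = c_prod C A B'"
    "c_cod C fs = A'" by (auto simp: C.lens_arr_iff)
  from l2 have g: "E \<in> c_obj C" "E' \<in> c_obj C" "g \<in> c_arr C" "c_dom C g = B" "c_cod C g = E" "gs \<in> c_arr C" "c_dom C gs = c_prod C B E'"
    "c_cod C gs = B'" by (auto simp: C.lens_arr_iff)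
  define g2 where "g2 = c_pair C (c_comp C (c_pi0 C A E') f) (c_pi1 C A E')"
  have g2: "g2 \<in> c_arr C" "c_dom C g2 = c_prod C A E'" "c_cod C g2 = c_prod C B E'"
    using f g by (simp_all add: g2_def)
  have e1: "c_comp D (psi A E') (Fa (c_comp C g2 gs)) =
     c_comp D (c_pair D (c_comp D (c_pi0 D (Fo A) (Fo E')) (Fa f)) (c_pi1 D (Fo A) (Fo E'))) (c_comp D (psi B E') (Fa gs))"
    using transport_F[of "c_prod C A E'" B E' g2 "psi A E'" gs] f g g2 by (simp add: g2_def)
  define gg where "gg = c_pair C (c_pi0 C A E') (c_comp C g2 gs)"
  have gg: "gg \<in> c_arr C" "c_dom C gg = c_prod C A E'" "c_cod C gg = c_prod C A B'"
    using f g g2 by (simp_all add: gg_def)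
  have e2: "c_comp D (psi A E') (Fa (c_comp C gg fs)) =
     c_comp D (c_pair D (c_pi0 D (Fo A) (Fo E')) (c_comp D (psi A E') (Fa (c_comp C g2 gs)))) (c_comp D (psi A B') (Fa fs))"
    using transport_F[of "c_prod C A E'" A B' gg "psi A E'" fs] f g g2 gg by (simp add: gg_def)
  have "c_comp D (psi A E') (Fa (c_comp C gg fs)) =
     c_comp D (c_pair D (c_pi0 D (Fo A) (Fo E')) (c_comp D
        (c_pair D (c_comp D (c_pi0 D (Fo A) (Fo E')) (Fa f)) (c_pi1 D (Fo A) (Fo E'))) (c_comp D (psi B E') (Fa gs))))
        (c_comp D (psi A B') (Fa fs))" unfolding e2 e1 ..
  then show ?thesis using f g by (simp add: gg_def g2_def F_comp del: F_fold F_fold' D.comp_pair D.comp_pair' C.comp_pair C.comp_pair')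
qed

end

context clf begin

lemma lens_term_iso: "is_iso (LensA D) (lens_bang D (Fo (c_term C), Fo (c_term C)))"
  unfolding lens_bang.simps
proof (rule is_iso_LensA_intro[where g = beta and gs = "c_zero D (c_prod D (c_term D) (Fo (c_term C))) (c_term D)"])
  show "((Fo (c_term C), Fo (c_term C)), (c_term D, c_term D), c_bang D (Fo (c_term C)),
     c_zero D (c_prod D (Fo (c_term C)) (c_term D)) (Fo (c_term C))) \<in> lens_arr D"
    unfolding D.lens_arr_iff D.add2_iff by simp
  show "((c_term D, c_term D), (Fo (c_term C), Fo (c_term C)), beta,
     c_zero D (c_prod D (c_term D) (Fo (c_term C))) (c_term D)) \<in> lens_arr D"
    unfolding D.lens_arr_iff D.add2_iff by simp
  have z: "c_zero D (c_prod D (Fo (c_term C)) (Fo (c_term C))) (Fo (c_term C)) = c_pi1 D (Fo (c_term C)) (Fo (c_term C))"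
    by (rule into_Fterm) simp_all
  show "lens_comp D ((Fo (c_term C), Fo (c_term C)), (c_term D, c_term D), c_bang D (Fo (c_term C)),
        c_zero D (c_prod D (Fo (c_term C)) (c_term D)) (Fo (c_term C)))
       ((c_term D, c_term D), (Fo (c_term C), Fo (c_term C)), beta,
        c_zero D (c_prod D (c_term D) (Fo (c_term C))) (c_term D)) =
     lens_id D (Fo (c_term C), Fo (c_term C))"
    using beta_facts z by simp
  have z2: "c_zero D (c_prod D (c_term D) (c_term D)) (c_term D) = c_pi1 D (c_term D) (c_term D)"
    by (rule D.term_eq) simp_all
  show "lens_comp D ((c_term D, c_term D), (Fo (c_term C), Fo (c_term C)), beta,
        c_zero D (c_prod D (c_term D) (Fo (c_term C))) (c_term D))
       ((Fo (c_term C), Fo (c_term C)), (c_term D, c_term D), c_bang D (Fo (c_term C)),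
        c_zero D (c_prod D (Fo (c_term C)) (c_term D)) (Fo (c_term C))) =
     lens_id D (c_term D, c_term D)"
    using beta_facts z2 by simp
qed

end

context clf begin

lemma lens_prod_iso:
  assumes o: "A \<in> c_obj C" "A' \<in> c_obj C" "B \<in> c_obj C" "B' \<in> c_obj C"
  shows "is_iso (LensA D) (lens_pair D (LensA_arr C D Fo Fa (lens_pi0 C (A, A') (B, B')))
                                       (LensA_arr C D Fo Fa (lens_pi1 C (A, A') (B, B'))))"
proof -
  define Z where "Z = Fo (c_prod C A B)"
  define Z' where "Z' = Fo (c_prod C A' B')"
  define P' where "P' = c_prod D (Fo A') (Fo B')"
  define AB where "AB = c_prod C A B"
  have ob: "Z \<in> c_obj D" "Z' \<in> c_obj D" "P' \<in> c_obj D" "AB \<in> c_obj C"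
    using o by (simp_all add: Z_def Z'_def P'_def AB_def)
  define s0 where "s0 = c_comp D (psi AB A') (Fa (c_pair C (c_pi1 C AB A') (c_zero C (c_prod C AB A') B')))"
  define s1 where "s1 = c_comp D (psi AB B') (Fa (c_pair C (c_zero C (c_prod C AB B') A') (c_pi1 C AB B')))"
  define S0 where "S0 = c_comp D (c_pair D (c_pi0 D Z P') (c_comp D (c_pi1 D Z P') (c_pi0 D (Fo A') (Fo B')))) s0"
  define S1 where "S1 = c_comp D (c_pair D (c_pi0 D Z P') (c_comp D (c_pi1 D Z P') (c_pi1 D (Fo A') (Fo B')))) s1"
  define s where "s = c_add D S0 S1"
  have S: "S0 \<in> c_arr D" "c_dom D S0 = c_prod D Z P'" "c_cod D S0 = Z'"
     "S1 \<in> c_arr D" "c_dom D S1 = c_prod D Z P'" "c_cod D S1 = Z'"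
    using o ob by (simp_all add: S0_def S1_def s0_def s1_def Z_def Z'_def P'_def AB_def)
  have Peq: "lens_pair D (LensA_arr C D Fo Fa (lens_pi0 C (A, A') (B, B')))
                                       (LensA_arr C D Fo Fa (lens_pi1 C (A, A') (B, B'))) =
     ((Z, Z'), (c_prod D (Fo A) (Fo B), P'), phi A B, s)"
    by (simp add: s_def S0_def S1_def s0_def s1_def Z_def Z'_def P'_def AB_def phi_def)
  have L0: "((Z, Z'), (Fo A, Fo A'), Fa (c_pi0 C A B), s0) \<in> lens_arr D"
    using lensF_arr[OF C.lens_pi0_arr[OF o, unfolded lens_pi0.simps]] by (simp add: Z_def Z'_def s0_def AB_def)
  have L1: "((Z, Z'), (Fo B, Fo B'), Fa (c_pi1 C A B), s1) \<in> lens_arr D"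
    using lensF_arr[OF C.lens_pi1_arr[OF o, unfolded lens_pi1.simps]] by (simp add: Z_def Z'_def s1_def AB_def)
  have Peq2: "lens_pair D ((Z, Z'), (Fo A, Fo A'), Fa (c_pi0 C A B), s0) ((Z, Z'), (Fo B, Fo B'), Fa (c_pi1 C A B), s1)
     = ((Z, Z'), (c_prod D (Fo A) (Fo B), P'), phi A B, s)"
    by (simp add: s_def S0_def S1_def P'_def phi_def)
  have Parr: "((Z, Z'), (c_prod D (Fo A) (Fo B), P'), phi A B, s) \<in> lens_arr D"
    unfolding Peq2[symmetric] using o ob by (intro D.lens_pair_arr[OF _ _ _ _ _ _ L0 L1]) simp_all
  have s: "s \<in> c_arr D" "c_dom D s = c_prod D Z P'" "c_cod D s = Z'"
    using Parr by (simp_all add: D.lens_arr_iff P'_def)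
  have sp0: "c_comp D s (Fa (c_pi0 C A' B')) = c_comp D (c_pi1 D Z P') (c_pi0 D (Fo A') (Fo B'))"
  proof -
    have "c_comp D s (Fa (c_pi0 C A' B')) = c_add D (c_comp D S0 (Fa (c_pi0 C A' B'))) (c_comp D S1 (Fa (c_pi0 C A' B')))"
      unfolding s_def using S o by (intro D.additiveD1 F_additive C.pi0_additive) (simp_all add: Z'_def)
    also have "\<dots> = c_comp D (c_pi1 D Z P') (c_pi0 D (Fo A') (Fo B'))"
      using o ob by (simp add: S0_def S1_def s0_def s1_def Z_def Z'_def P'_def AB_def)
    finally show ?thesis .
  qed
  have sp1: "c_comp D s (Fa (c_pi1 C A' B')) = c_comp D (c_pi1 D Z P') (c_pi1 D (Fo A') (Fo B'))"
  proof -
    have "c_comp D s (Fa (c_pi1 C A' B')) = c_add D (c_comp D S0 (Fa (c_pi1 C A' B'))) (c_comp D S1 (Fa (c_pi1 C A' B')))"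
      unfolding s_def using S o by (intro D.additiveD1 F_additive C.pi1_additive) (simp_all add: Z'_def)
    also have "\<dots> = c_comp D (c_pi1 D Z P') (c_pi1 D (Fo A') (Fo B'))"
      using o ob by (simp add: S0_def S1_def s0_def s1_def Z_def Z'_def P'_def AB_def)
    finally show ?thesis .
  qed
  have sphi: "c_comp D s (phi A' B') = c_pi1 D Z P'"
    unfolding phi_def using s o ob sp0 sp1 D.pair_eta[of "c_pi1 D Z P'" "Fo A'" "Fo B'"]
    by (simp add: Z'_def P'_def)
  have seq: "s = c_comp D (c_pi1 D Z P') (psi A' B')"
  proof -
    have "s = c_comp D (c_comp D s (phi A' B')) (psi A' B')" using s o by (simp add: Z'_def)
    then show ?thesis by (simp add: sphi)
  qed
  define t where "t = c_comp D (c_pi1 D (c_prod D (Fo A) (Fo B)) Z') (phi A' B')"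
  have Qarr: "((c_prod D (Fo A) (Fo B), P'), (Z, Z'), psi A B, t) \<in> lens_arr D"
    unfolding D.lens_arr_iff
  proof (intro conjI)
    show "additive_2nd D (c_prod D (Fo A) (Fo B)) Z' P' t"
      unfolding D.add2_iff
    proof (intro conjI allI impI)
      fix x a1 a2 assume a: "x \<in> c_arr D" "a1 \<in> c_arr D" "a2 \<in> c_arr D" "c_cod D x = c_prod D (Fo A) (Fo B)"
        "c_cod D a1 = Z'" "c_cod D a2 = Z'" "c_dom D a1 = c_dom D x" "c_dom D a2 = c_dom D x"
      have e0: "c_comp D (c_add D a1 a2) (Fa (c_pi0 C A' B')) = c_add D (c_comp D a1 (Fa (c_pi0 C A' B'))) (c_comp D a2 (Fa (c_pi0 C A' B')))"
        using a o by (intro D.additiveD1 F_additive C.pi0_additive) (simp_all add: Z'_def)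
      have e1: "c_comp D (c_add D a1 a2) (Fa (c_pi1 C A' B')) = c_add D (c_comp D a1 (Fa (c_pi1 C A' B'))) (c_comp D a2 (Fa (c_pi1 C A' B')))"
        using a o by (intro D.additiveD1 F_additive C.pi1_additive) (simp_all add: Z'_def)
      show "c_comp D (c_pair D x (c_add D a1 a2)) t =
         c_add D (c_comp D (c_pair D x a1) t) (c_comp D (c_pair D x a2) t)"
        unfolding t_def phi_def using a o e0 e1 by (simp add: Z'_def D.pair_add)
    next
      fix x assume a: "x \<in> c_arr D" "c_cod D x = c_prod D (Fo A) (Fo B)"
      have e0: "c_comp D (c_zero D (c_dom D x) Z') (Fa (c_pi0 C A' B')) = c_zero D (c_dom D x) (Fo A')"
        using a o D.additiveD2[OF F_additive[OF _ C.pi0_additive], of A' B' "c_dom D x" Z'] by (simp add: Z'_def)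
      have e1: "c_comp D (c_zero D (c_dom D x) Z') (Fa (c_pi1 C A' B')) = c_zero D (c_dom D x) (Fo B')"
        using a o D.additiveD2[OF F_additive[OF _ C.pi1_additive], of A' B' "c_dom D x" Z'] by (simp add: Z'_def)
      show "c_comp D (c_pair D x (c_zero D (c_dom D x) Z')) t = c_zero D (c_dom D x) P'"
        unfolding t_def phi_def using a o e0 e1 ob by (simp add: Z'_def P'_def D.pair_zero)
    qed
  qed (use o ob in \<open>simp_all add: t_def Z_def Z'_def P'_def\<close>)
  show ?thesis unfolding Peq
  proof (rule is_iso_LensA_intro[OF Parr Qarr])
    show "lens_comp D ((Z, Z'), (c_prod D (Fo A) (Fo B), P'), phi A B, s) ((c_prod D (Fo A) (Fo B), P'), (Z, Z'), psi A B, t) =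
      lens_id D (Z, Z')"
      unfolding seq t_def using o ob by (simp add: Z_def Z'_def P'_def)
    show "lens_comp D ((c_prod D (Fo A) (Fo B), P'), (Z, Z'), psi A B, t) ((Z, Z'), (c_prod D (Fo A) (Fo B), P'), phi A B, s) =
      lens_id D (c_prod D (Fo A) (Fo B), P')"
      unfolding seq t_def using o ob by (simp add: Z_def Z'_def P'_def)
  qed
qed

end

lemma lens_split: obtains a a' b b' f fs where "l = ((a, a'), (b, b'), f, fs)"
  by (metis prod.collapse)

theorem propositionB11:
  fixes C :: "('o, 'a) clac" and D :: "('p, 'b) clac"
    and Fo :: "'o \<Rightarrow> 'p" and Fa :: "'a \<Rightarrow> 'b"
  assumes "clac C" and "clac D" and "clac_functor C D Fo Fa"
  shows "clac_functor (LensA C) (LensA D) (LensA_obj Fo) (LensA_arr C D Fo Fa)"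
proof -
  interpret clf C D Fo Fa by unfold_locales (rule assms)+
  show ?thesis unfolding clac_functor_def is_functor_def preserves_products_def preserves_additive_def
  proof (intro conjI ballI allI impI)
    fix X assume "X \<in> c_obj (LensA C)"
    then show "LensA_obj Fo X \<in> c_obj (LensA D)" by (cases X) simp
  next
    fix X Y f assume h: "f \<in> hom (LensA C) X Y"
    obtain a a' b b' f1 fs where fe: "f = ((a, a'), (b, b'), f1, fs)" by (rule lens_split)
    show "LensA_arr C D Fo Fa f \<in> hom (LensA D) (LensA_obj Fo X) (LensA_obj Fo Y)"
      using h lensF_arr[of a a' b b' f1 fs] unfolding fe by (auto simp: hom_LensA)
  next
    fix X assume "X \<in> c_obj (LensA C)"
    then show "LensA_arr C D Fo Fa (c_id (LensA C) X) = c_id (LensA D) (LensA_obj Fo X)" by (cases X) simp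
  next
    fix X Y E f g assume h: "f \<in> hom (LensA C) X Y" "g \<in> hom (LensA C) Y E"
    obtain a a' b b' f1 fs where fe: "f = ((a, a'), (b, b'), f1, fs)" by (rule lens_split)
    obtain c c' e e' g1 gs where ge: "g = ((c, c'), (e, e'), g1, gs)" by (rule lens_split)
    show "LensA_arr C D Fo Fa (c_comp (LensA C) f g) = c_comp (LensA D) (LensA_arr C D Fo Fa f) (LensA_arr C D Fo Fa g)"
      using h lensF_comp[of a a' b b' f1 fs e e' g1 gs] unfolding fe ge hom_LensA by (auto simp del: LensA_arr')
  next
    show "is_iso (LensA D) (c_bang (LensA D) (LensA_obj Fo (c_term (LensA C))))"
      using lens_term_iso by simp
  next
    fix X Y assume h: "X \<in> c_obj (LensA C)" "Y \<in> c_obj (LensA C)"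
    obtain a a' where X: "X = (a, a')" by (cases X)
    obtain b b' where Y: "Y = (b, b')" by (cases Y)
    show "is_iso (LensA D) (c_pair (LensA D) (LensA_arr C D Fo Fa (c_pi0 (LensA C) X Y))
         (LensA_arr C D Fo Fa (c_pi1 (LensA C) X Y)))"
      using h lens_prod_iso[of a a' b b'] unfolding X Y by (simp del: LensA_arr' lens_pi0.simps lens_pi1.simps lens_pair.simps)
  next
    fix X Y f g assume h: "f \<in> hom (LensA C) X Y" "g \<in> hom (LensA C) X Y"
    obtain a a' b b' f1 fs where fe: "f = ((a, a'), (b, b'), f1, fs)" by (rule lens_split)
    obtain c c' e e' g1 gs where ge: "g = ((c, c'), (e, e'), g1, gs)" by (rule lens_split)
    show "LensA_arr C D Fo Fa (c_add (LensA C) f g) = c_add (LensA D) (LensA_arr C D Fo Fa f) (LensA_arr C D Fo Fa g)"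
      using h unfolding fe ge hom_LensA by (auto simp: C.lens_arr_iff)
  next
    fix X Y assume h: "X \<in> c_obj (LensA C)" "Y \<in> c_obj (LensA C)"
    obtain a a' where X: "X = (a, a')" by (cases X)
    obtain b b' where Y: "Y = (b, b')" by (cases Y)
    show "LensA_arr C D Fo Fa (c_zero (LensA C) X Y) = c_zero (LensA D) (LensA_obj Fo X) (LensA_obj Fo Y)"
      using h unfolding X Y by simp
  qed
qed

end
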